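(* Let $t\ge2$, $k\ge 2$, and let $C$ be a binary linear $t$-CIS $[tk,k]$ code. Then $C$ is equivalent (by a permutation of coordinates) to a $t$-CIS $[tk,k]$ code $C_1$ which is obtained from some $t$-CIS $[t(k-1),k-1]$ code by the building up construction; that is, there exist invertible $(k-1)\times(k-1)$ matrices $A_1,\dots,A_t$ over $\mathbb{F}_2$ such that $(A_1\ \cdots\ A_t)$ generates a $t$-CIS $[t(k-1),k-1]$ code, and choices of $\mathbf x_j\in\mathbb{F}_2^{k-1}$, $y_{ij}\in\mathbb{F}_2$, such that $C_1$ is generated by the matrix $G_1$ of the building up construction.
   Context: Building up construction: given invertible $m\times m$ matrices $A_1,\dots,A_t$ over $\mathbb{F}_2$ with rows $A_j(\mathbf r_1),\dots,A_j(\mathbf r_m)$, vectors $\mathbf x_j\in\mathbb{F}_2^m$ and bits $y_{ij}$ ($1\le i\le m$, $1\le j\le t$), let $c_{ij}\in\mathbb{F}_2$ be the unique elements with $\mathbf x_j=\sum_i c_{ij}A_j(\mathbf r_i)$ and $z_j=1+\sum_i c_{ij}y_{ij}$; $G_1$ is the $(m+1)\times t(m+1)$ matrix whose first row is $(z_1,\mathbf x_1,z_2,\mathbf x_2,\dots,z_t,\mathbf x_t)$ and whose $(i+1)$-th row is $(y_{i1},A_1(\mathbf r_i),y_{i2},A_2(\mathbf r_i),\dots,y_{it},A_t(\mathbf r_i))$. A binary linear $[tk,k]$ code is $t$-CIS if its coordinate set can be partitioned into $t$ pairwise disjoint information sets, an information set being a set of $k$ coordinates whose columns in a generator matrix are linearly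 independent. *)

theory Defs
  imports Main "HOL-Library.Z2" "HOL-Combinatorics.Permutations"
begin

(* Matrices over F_2 are functions  nat => nat => bit  (row, column), 0-based;
   only entries with indices in range matter. Vectors are  nat => bit. *)

definition rowspace :: "nat \<Rightarrow> nat \<Rightarrow> (nat \<Rightarrow> nat \<Rightarrow> bit) \<Rightarrow> (nat \<Rightarrow> bit) set" where
  "rowspace k n G = {v. \<exists>a::nat \<Rightarrow> bit. \<forall>c. v c = (if c < n then (\<Sum>i<k. a i * G i c) else 0)}"

definition info_set :: "nat \<Rightarrow> (nat \<Rightarrow> nat \<Rightarrow> bit) \<Rightarrow> nat set \<Rightarrow> bool" where
  "info_set k G S \<longleftrightarrow> finite S \<and> card S = k \<and>
     (\<forall>a::nat \<Rightarrow> bit. (\<forall>i<k. (\<Sum>c\<in>S. a c * G i c) = 0) \<longrightarrow> (\<forall>c\<in>S. a c = 0))"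

(* G (k x tk) generates a t-CIS [tk,k] code: the coordinate set {..<t*k} is
   partitioned into t pairwise disjoint information sets
   (this forces G to have rank k) *)
definition tCIS_gen :: "nat \<Rightarrow> nat \<Rightarrow> (nat \<Rightarrow> nat \<Rightarrow> bit) \<Rightarrow> bool" where
  "tCIS_gen t k G \<longleftrightarrow> (\<exists>P :: nat \<Rightarrow> nat set.
      (\<forall>j<t. info_set k G (P j)) \<and>
      (\<forall>j<t. \<forall>j'<t. j \<noteq> j' \<longrightarrow> P j \<inter> P j' = {}) \<and>
      (\<Union>j<t. P j) = {..<t*k})"

definition tCIS_code :: "nat \<Rightarrow> nat \<Rightarrow> (nat \<Rightarrow> bit) set \<Rightarrow> bool" where
  "tCIS_code t k C \<longleftrightarrow> (\<exists>G. C = rowspace k (t*k) G \<and> tCIS_gen t k G)"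

definition perm_code :: "nat \<Rightarrow> (nat \<Rightarrow> nat) \<Rightarrow> (nat \<Rightarrow> bit) set \<Rightarrow> (nat \<Rightarrow> bit) set" where
  "perm_code n \<sigma> C = (\<lambda>v c. if c < n then v (\<sigma> c) else 0) ` C"

definition mat_invertible :: "nat \<Rightarrow> (nat \<Rightarrow> nat \<Rightarrow> bit) \<Rightarrow> bool" where
  "mat_invertible m A \<longleftrightarrow> (\<exists>B. \<forall>i<m. \<forall>l<m.
      (\<Sum>p<m. A i p * B p l) = (if i = l then 1 else 0) \<and>
      (\<Sum>p<m. B i p * A p l) = (if i = l then 1 else 0))"

(* the m x tm matrix (A_1 ... A_t); A j is the (j+1)-th block *)
definition concat_blocks :: "nat \<Rightarrow> (nat \<Rightarrow> nat \<Rightarrow> nat \<Rightarrow> bit) \<Rightarrow> nat \<Rightarrow> nat \<Rightarrow> bit" where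
  "concat_blocks m A i c = A (c div m) i (c mod m)"

definition coeffs :: "nat \<Rightarrow> (nat \<Rightarrow> nat \<Rightarrow> bit) \<Rightarrow> (nat \<Rightarrow> bit) \<Rightarrow> nat \<Rightarrow> bit" where
  "coeffs m A x = (THE c. (\<forall>i. m \<le> i \<longrightarrow> c i = 0) \<and> (\<forall>l<m. x l = (\<Sum>i<m. c i * A i l)))"

(* A j = A_{j+1}, x j = x_{j+1} (x j l its (l+1)-th entry), y i j = y_{i+1,j+1}.
   Column j*(m+1) + p: p = 0 is the z/y column, p = l+1 the x/A column l. *)
definition build_up :: "nat \<Rightarrow> (nat \<Rightarrow> nat \<Rightarrow> nat \<Rightarrow> bit) \<Rightarrow> (nat \<Rightarrow> nat \<Rightarrow> bit)
     \<Rightarrow> (nat \<Rightarrow> nat \<Rightarrow> bit) \<Rightarrow> nat \<Rightarrow> nat \<Rightarrow> bit" where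
  "build_up m A x y r c =
     (let j = c div (m+1); p = c mod (m+1) in
      if r = 0 then
        (if p = 0 then 1 + (\<Sum>i<m. coeffs m (A j) (x j) i * y i j) else x j (p - 1))
      else
        (if p = 0 then y (r - 1) j else A j (r - 1) (p - 1)))"

end

theory Submission
  imports Defs "Jordan_Normal_Form.Determinant"
begin


definition tomat :: "nat \<Rightarrow> (nat \<Rightarrow> nat \<Rightarrow> bit) \<Rightarrow> bit mat" where
  "tomat n f = mat n n (\<lambda>(i,j). f i j)"

lemma bit_cases2: "(a::bit) = 0 \<or> a = 1" by (metis bit_not_zero_iff)
lemma bit_add_self[simp]: "(a::bit) + a = 0" using bit_cases2[of a] by auto

declare add_bit_eq_xor[simp del] mult_bit_eq_and[simp del]

lemma tomat_carrier[simp]: "tomat n f \<in> carrier_mat n n" by (simp add: tomat_def)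

lemma tomat_cong: "(\<And>i q. i < n \<Longrightarrow> q < n \<Longrightarrow> f i q = g i q) \<Longrightarrow> tomat n f = tomat n g"
  unfolding tomat_def by (rule eq_matI) auto

lemma L1:
  assumes "det (tomat n f) \<noteq> 0" "\<forall>i<n. (\<Sum>q<n. f i q * v q) = 0"
  shows "\<forall>q<n. v q = 0"
proof (rule ccontr)
  assume "\<not> ?thesis"
  then obtain q where q: "q < n" "v q \<noteq> 0" by auto
  let ?v = "vec n v"
  have "?v \<noteq> 0\<^sub>v n" using q by (metis index_vec index_zero_vec(1))
  moreover have "tomat n f *\<^sub>v ?v = 0\<^sub>v n"
  proof (rule eq_vecI)
    fix i assume "i < dim_vec (0\<^sub>v n :: bit vec)"
    then have i: "i < n" by simp
    have "(tomat n f *\<^sub>v ?v) $ i = row (tomat n f) i \<bullet> ?v" using i by (simp add: tomat_def)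
    also have "\<dots> = (\<Sum>q\<in>{0..<n}. row (tomat n f) i $ q * ?v $ q)" by (simp only: scalar_prod_def dim_vec)
    also have "\<dots> = (\<Sum>q<n. f i q * v q)" unfolding atLeast0LessThan
      by (rule sum.cong) (auto simp: tomat_def i)
    finally have "(tomat n f *\<^sub>v ?v) $ i = (\<Sum>q<n. f i q * v q)" .
    then show "(tomat n f *\<^sub>v ?v) $ i = 0\<^sub>v n $ i" using assms(2) i by simp
  qed (simp add: tomat_def)
  ultimately have "det (tomat n f) = 0"
    using det_0_iff_vec_prod_zero_field[OF tomat_carrier[of n f]] vec_carrier by blast
  with assms(1) show False by simp
qed

lemma L2:
  assumes "\<And>v. \<forall>i<n. (\<Sum>q<n. f i q * v q) = 0 \<Longrightarrow> \<forall>q<n. v q = 0"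
  shows "det (tomat n f) \<noteq> 0"
proof
  assume "det (tomat n f) = 0"
  then obtain v where v: "v \<in> carrier_vec n" "v \<noteq> 0\<^sub>v n" "tomat n f *\<^sub>v v = 0\<^sub>v n"
    using det_0_iff_vec_prod_zero_field[OF tomat_carrier[of n f]] by auto
  have "\<forall>i<n. (\<Sum>q<n. f i q * (v $ q)) = 0"
  proof (intro allI impI)
    fix i assume i: "i < n"
    have "(tomat n f *\<^sub>v v) $ i = row (tomat n f) i \<bullet> v" using i by (simp add: tomat_def)
    also have "\<dots> = (\<Sum>q\<in>{0..<n}. row (tomat n f) i $ q * v $ q)" using v(1) by (simp only: scalar_prod_def carrier_vecD)
    also have "\<dots> = (\<Sum>q<n. f i q * v $ q)" unfolding atLeast0LessThan
      by (rule sum.cong) (auto simp: tomat_def i)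
    finally have "(tomat n f *\<^sub>v v) $ i = (\<Sum>q<n. f i q * v $ q)" .
    then show "(\<Sum>q<n. f i q * (v $ q)) = 0" using v(3) i by simp
  qed
  from assms[OF this] have "v = 0\<^sub>v n" using v(1) by (intro eq_vecI) auto
  with v(2) show False by simp
qed

lemma tomat_transpose: "transpose_mat (tomat n f) = tomat n (\<lambda>i q. f q i)"
  unfolding tomat_def by (rule eq_matI) auto

lemma L3:
  assumes "det (tomat n f) \<noteq> 0" "\<forall>q<n. (\<Sum>i<n. w i * f i q) = 0"
  shows "\<forall>i<n. w i = 0"
proof -
  have "det (tomat n (\<lambda>i q. f q i)) \<noteq> 0"
    using assms(1) det_transpose[OF tomat_carrier[of n f]] tomat_transpose by metis
  moreover have "\<forall>q<n. (\<Sum>i<n. f i q * w i) = 0"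
  proof (intro allI impI)
    fix q assume "q < n"
    have "(\<Sum>i<n. f i q * w i) = (\<Sum>i<n. w i * f i q)" by (intro sum.cong refl mult.commute)
    then show "(\<Sum>i<n. f i q * w i) = 0" using assms(2) \<open>q < n\<close> by simp
  qed
  ultimately show ?thesis using L1[of n "\<lambda>i q. f q i" w] by blast
qed

lemma mat_entry_sum:
  assumes "A \<in> carrier_mat n n" "B \<in> carrier_mat n n" "i < n" "l < n"
  shows "(A * B) $$ (i,l) = (\<Sum>p<n. A $$ (i,p) * B $$ (p, l))"
proof -
  have "(A * B) $$ (i,l) = row A i \<bullet> col B l" using assms by simp
  also have "\<dots> = (\<Sum>p\<in>{0..<n}. row A i $ p * col B l $ p)"
    unfolding scalar_prod_def using assms(2) by simp
  also have "\<dots> = (\<Sum>p<n. A $$ (i,p) * B $$ (p, l))" unfolding atLeast0LessThan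
    apply (rule sum.cong) using assms by auto
  finally show ?thesis .
qed

lemma L4:
  assumes "det (tomat n f) \<noteq> 0"
  shows "mat_invertible n f"
proof -
  have "tomat n f \<in> Units (ring_mat TYPE(bit) n ())"
    by (rule det_non_zero_imp_unit[OF tomat_carrier assms])
  then obtain B where B: "B \<in> carrier_mat n n" "B * tomat n f = 1\<^sub>m n" "tomat n f * B = 1\<^sub>m n"
    unfolding Units_def ring_mat_def by auto
  show ?thesis unfolding mat_invertible_def
  proof (intro exI[of _ "\<lambda>i j. B $$ (i,j)"] allI impI conjI)
    fix i l assume il: "i < n" "l < n"
    have "(tomat n f * B) $$ (i,l) = (\<Sum>p<n. tomat n f $$ (i,p) * B $$ (p, l))"
      using il B(1) by (intro mat_entry_sum) auto
    also have "\<dots> = (\<Sum>p<n. f i p * B $$ (p, l))"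
      apply (rule sum.cong) using il by (auto simp: tomat_def)
    finally show "(\<Sum>p<n. f i p * B $$ (p, l)) = (if i = l then 1 else 0)" using B(3) il by simp
    have "(B * tomat n f) $$ (i,l) = (\<Sum>p<n. B $$ (i,p) * tomat n f $$ (p, l))"
      using il B(1) by (intro mat_entry_sum) auto
    also have "\<dots> = (\<Sum>p<n. B $$ (i, p) * f p l)"
      apply (rule sum.cong) using il by (auto simp: tomat_def)
    finally show "(\<Sum>p<n. B $$ (i, p) * f p l) = (if i = l then 1 else 0)" using B(2) il by simp
  qed
qed

lemma L5:
  assumes "det (tomat (Suc m) f) \<noteq> 0"
  shows "\<exists>l<Suc m. det (tomat m (\<lambda>i q. f (Suc i) (insert_index l q))) \<noteq> 0"
proof (rule ccontr)
  assume "\<not> ?thesis"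
  then have z: "\<forall>l<Suc m. det (tomat m (\<lambda>i q. f (Suc i) (insert_index l q))) = 0" by auto
  have d: "mat_delete (tomat (Suc m) f) 0 l = tomat m (\<lambda>i q. f (Suc i) (insert_index l q))" for l
    unfolding mat_delete_def tomat_def insert_index_def by (rule eq_matI) auto
  have "det (tomat (Suc m) f) = (\<Sum>j<Suc m. tomat (Suc m) f $$ (0,j) * cofactor (tomat (Suc m) f) 0 j)"
    by (rule laplace_expansion_row) auto
  also have "\<dots> = 0" using z by (simp add: cofactor_def d)
  finally show False using assms by simp
qed



lemma det_from_info:
  assumes inf: "info_set n G S" and g: "bij_betw g {..<n} S"
  shows "det (tomat n (\<lambda>r q. G r (g q))) \<noteq> 0"
proof (rule L2)
  fix v assume h: "\<forall>i<n. (\<Sum>q<n. G i (g q) * v q) = 0"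
  define a where "a c = v (inv_into {..<n} g c)" for c
  have inj: "inj_on g {..<n}" using g bij_betw_def by blast
  have "\<forall>i<n. (\<Sum>c\<in>S. a c * G i c) = 0"
  proof (intro allI impI)
    fix i assume i: "i < n"
    have "(\<Sum>c\<in>S. a c * G i c) = (\<Sum>q<n. a (g q) * G i (g q))"
      using sum.reindex_bij_betw[OF g, of "\<lambda>c. a c * G i c"] by simp
    also have "\<dots> = (\<Sum>q<n. G i (g q) * v q)"
      apply (rule sum.cong) using inj by (auto simp: a_def mult.commute)
    finally show "(\<Sum>c\<in>S. a c * G i c) = 0" using h i by simp
  qed
  then have "\<forall>c\<in>S. a c = 0" using inf unfolding info_set_def by blast
  then show "\<forall>q<n. v q = 0"
    using g inj unfolding a_def bij_betw_def by (metis imageI inv_into_f_f lessThan_iff)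
qed

lemma info_from_det:
  assumes d: "det (tomat n (\<lambda>r q. H r (g q))) \<noteq> 0" and g: "bij_betw g {..<n} S"
  shows "info_set n H S"
  unfolding info_set_def
proof (intro conjI allI impI)
  show "finite S" using g bij_betw_finite by blast
  show "card S = n" using bij_betw_same_card[OF g] by simp
  fix a assume h: "\<forall>i<n. (\<Sum>c\<in>S. a c * H i c) = 0"
  have "\<forall>i<n. (\<Sum>q<n. H i (g q) * a (g q)) = 0"
  proof (intro allI impI)
    fix i assume i: "i < n"
    have "(\<Sum>q<n. H i (g q) * a (g q)) = (\<Sum>c\<in>S. a c * H i c)"
      using sum.reindex_bij_betw[OF g, of "\<lambda>c. a c * H i c"] by (simp add: mult.commute)
    then show "(\<Sum>q<n. H i (g q) * a (g q)) = 0" using h i by simp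
  qed
  from L1[OF d this] have "\<forall>q<n. a (g q) = 0" .
  then show "\<forall>c\<in>S. a c = 0" using g unfolding bij_betw_def by auto
qed

lemma coeffs_prop:
  assumes inv: "mat_invertible m A"
  shows "\<forall>l<m. x l = (\<Sum>i<m. Defs.coeffs m A x i * A i l)"
proof -
  obtain B where B: "\<forall>i<m. \<forall>l<m. (\<Sum>p<m. A i p * B p l) = (if i = l then 1 else 0) \<and>
      (\<Sum>p<m. B i p * A p l) = (if i = l then 1 else 0)"
    using inv unfolding mat_invertible_def by blast
  define c0 where "c0 i = (if i < m then (\<Sum>l<m. x l * B l i) else 0)" for i
  let ?P = "\<lambda>c. (\<forall>i. m \<le> i \<longrightarrow> c i = 0) \<and> (\<forall>l<m. x l = (\<Sum>i<m. c i * A i l))"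
  have sol: "\<forall>p<m. x p = (\<Sum>i<m. c0 i * A i p)"
  proof (intro allI impI)
    fix p assume p: "p < m"
    have "(\<Sum>i<m. c0 i * A i p) = (\<Sum>i<m. \<Sum>l<m. x l * B l i * A i p)"
      by (rule sum.cong) (auto simp: c0_def sum_distrib_right)
    also have "\<dots> = (\<Sum>l<m. \<Sum>i<m. x l * B l i * A i p)" by (rule sum.swap)
    also have "\<dots> = (\<Sum>l<m. x l * (if l = p then 1 else 0))"
    proof (rule sum.cong)
      fix l assume "l \<in> {..<m}"
      then have e: "(\<Sum>i<m. B l i * A i p) = (if l = p then 1 else 0)" using B p by auto
      have "(\<Sum>i<m. x l * B l i * A i p) = x l * (\<Sum>i<m. B l i * A i p)"
        by (simp add: sum_distrib_left mult.assoc)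
      then show "(\<Sum>i<m. x l * B l i * A i p) = x l * (if l = p then 1 else 0)" by (simp only: e)
    qed simp
    also have "\<dots> = (\<Sum>l<m. if l = p then x l else 0)" by (rule sum.cong) auto
    also have "\<dots> = x p" using p by simp
    finally show "x p = (\<Sum>i<m. c0 i * A i p)" by simp
  qed
  have uniq: "c = c0" if "?P c" for c
  proof
    fix i show "c i = c0 i"
    proof (cases "i < m")
      case False then show ?thesis using that by (simp add: c0_def)
    next
      case True
      have "(\<Sum>l<m. x l * B l i) = (\<Sum>l<m. (\<Sum>j<m. c j * A j l) * B l i)"
        by (rule sum.cong) (use that in simp_all)
      also have "\<dots> = (\<Sum>l<m. \<Sum>j<m. c j * A j l * B l i)" by (simp add: sum_distrib_right)
      also have "\<dots> = (\<Sum>j<m. \<Sum>l<m. c j * A j l * B l i)" by (rule sum.swap)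
      also have "\<dots> = (\<Sum>j<m. c j * (if j = i then 1 else 0))"
      proof (rule sum.cong)
        fix j assume "j \<in> {..<m}"
        then have e: "(\<Sum>l<m. A j l * B l i) = (if j = i then 1 else 0)" using B True by auto
        have "(\<Sum>l<m. c j * A j l * B l i) = c j * (\<Sum>l<m. A j l * B l i)"
          by (simp add: sum_distrib_left mult.assoc)
        then show "(\<Sum>l<m. c j * A j l * B l i) = c j * (if j = i then 1 else 0)" by (simp only: e)
      qed simp
      also have "\<dots> = (\<Sum>j<m. if j = i then c j else 0)" by (rule sum.cong) auto
      also have "\<dots> = c i" using True by simp
      finally show ?thesis using True by (simp add: c0_def)
    qed
  qed
  have "?P c0" using sol by (simp add: c0_def)
  then have "Defs.coeffs m A x = c0" unfolding Defs.coeffs_def using uniq by (rule the_equality)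
  then show ?thesis using sol by simp
qed



lemma z_ident:
  assumes d: "det (tomat (Suc m) (\<lambda>r q. G r (e q))) \<noteq> 0"
      and inv: "mat_invertible m (\<lambda>i l. G (Suc i) (e (Suc l)))"
  shows "G 0 (e 0) = 1 + (\<Sum>i<m. Defs.coeffs m (\<lambda>i l. G (Suc i) (e (Suc l))) (\<lambda>l. G 0 (e (Suc l))) i * G (Suc i) (e 0))"
proof (rule ccontr)
  define cc where "cc = Defs.coeffs m (\<lambda>i l. G (Suc i) (e (Suc l))) (\<lambda>l. G 0 (e (Suc l)))"
  assume "\<not> ?thesis"
  then have ne: "G 0 (e 0) \<noteq> 1 + (\<Sum>i<m. cc i * G (Suc i) (e 0))" by (simp add: cc_def)
  have hz: "G 0 (e 0) + (\<Sum>i<m. cc i * G (Suc i) (e 0)) = 0"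
    using ne bit_cases2[of "G 0 (e 0)"] bit_cases2[of "\<Sum>i<m. cc i * G (Suc i) (e 0)"]
    by (auto simp: add_bit_eq_xor)
  have hx: "\<forall>l<m. G 0 (e (Suc l)) = (\<Sum>i<m. cc i * G (Suc i) (e (Suc l)))"
    using coeffs_prop[OF inv, of "\<lambda>l. G 0 (e (Suc l))"] unfolding cc_def by simp
  define w where "w r = (if r = 0 then 1 else cc (r - 1))" for r
  have "\<forall>q<Suc m. (\<Sum>r<Suc m. w r * G r (e q)) = 0"
  proof (intro allI impI)
    fix q assume q: "q < Suc m"
    have "(\<Sum>r<Suc m. w r * G r (e q)) = w 0 * G 0 (e q) + (\<Sum>i<m. w (Suc i) * G (Suc i) (e q))"
      by (rule sum.lessThan_Suc_shift)
    also have "\<dots> = G 0 (e q) + (\<Sum>i<m. cc i * G (Suc i) (e q))"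
      by (simp add: w_def)
    also have "\<dots> = 0"
    proof (cases q)
      case 0 then show ?thesis using hz by simp
    next
      case (Suc l)
      then have "l < m" using q by simp
      then have "G 0 (e q) = (\<Sum>i<m. cc i * G (Suc i) (e q))" using hx Suc by simp
      then show ?thesis by simp
    qed
    finally show "(\<Sum>r<Suc m. w r * G r (e q)) = 0" .
  qed
  from L3[OF d this] have "w 0 = 0" by simp
  then show False by (simp add: w_def)
qed

lemma choose_e:
  assumes inf: "info_set (Suc m) G S"
  shows "\<exists>e. bij_betw e {..<Suc m} S \<and> det (tomat m (\<lambda>i q. G (Suc i) (e (Suc q)))) \<noteq> 0"
proof -
  have fc: "finite S" "card S = Suc m" using inf info_set_def by auto
  then obtain f where f: "bij_betw f {..<Suc m} S"
    using ex_bij_betw_nat_finite[of S] by (auto simp: atLeast0LessThan)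
  have "det (tomat (Suc m) (\<lambda>r q. G r (f q))) \<noteq> 0" by (rule det_from_info[OF inf f])
  from L5[OF this] obtain l where l: "l < Suc m"
    and dl: "det (tomat m (\<lambda>i q. G (Suc i) (f (insert_index l q)))) \<noteq> 0" by auto
  define \<tau> where "\<tau> q = (if q = 0 then l else insert_index l (q - 1))" for q
  have ii: "insert_index l q \<noteq> l" for q by (simp add: insert_index_def)
  have ij: "a = b" if "insert_index l a = insert_index l b" for a b
    by (metis delete_insert_index that)
  have inj: "inj_on \<tau> {..<Suc m}"
  proof (rule inj_onI)
    fix a b assume "\<tau> a = \<tau> b"
    then show "a = b"
    proof (cases "a = 0"; cases "b = 0")
      assume "\<tau> a = \<tau> b" "a \<noteq> 0" "b \<noteq> 0"
      then have "insert_index l (a - 1) = insert_index l (b - 1)" by (simp add: \<tau>_def)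
      then have "a - 1 = b - 1" by (rule ij)
      then show "a = b" using \<open>a \<noteq> 0\<close> \<open>b \<noteq> 0\<close> by simp
    qed (auto simp: \<tau>_def ii ii[symmetric])
  qed
  have sub: "\<tau> ` {..<Suc m} \<subseteq> {..<Suc m}" using l unfolding \<tau>_def insert_index_def by auto
  have bt: "bij_betw \<tau> {..<Suc m} {..<Suc m}"
    using endo_inj_surj[OF _ sub inj] inj by (simp add: bij_betw_def)
  have "bij_betw (f \<circ> \<tau>) {..<Suc m} S" using bij_betw_trans[OF bt f] .
  moreover have "(\<lambda>i q. G (Suc i) ((f\<circ>\<tau>) (Suc q))) = (\<lambda>i q. G (Suc i) (f (insert_index l q)))"
    by (simp add: \<tau>_def)
  ultimately show ?thesis using dl by (intro exI[of _ "f \<circ> \<tau>"]) simp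
qed

lemma block_bij: "bij_betw (\<lambda>q. j*n+q::nat) {..<n} {j*n..<j*n+n}"
  unfolding bij_betw_def
proof
  show "inj_on (\<lambda>q. j*n+q) {..<n}" by (rule inj_onI) simp
  show "(\<lambda>q. j*n+q) ` {..<n} = {j*n..<j*n+n}"
  proof
    show "(\<lambda>q. j*n+q) ` {..<n} \<subseteq> {j*n..<j*n+n}" by auto
    show "{j*n..<j*n+n} \<subseteq> (\<lambda>q. j*n+q) ` {..<n}"
    proof
      fix c assume "c \<in> {j*n..<j*n+n}"
      then have "c = j*n + (c - j*n)" "c - j*n < n" by auto
      then show "c \<in> (\<lambda>q. j*n+q) ` {..<n}" by blast
    qed
  qed
qed

lemma block_div:
  assumes "j*n \<le> c" "c < j*n+n" shows "c div (n::nat) = j"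
proof -
  define r where "r = c - j*n"
  have c: "c = r + j*n" "r < n" using assms by (auto simp: r_def)
  then have "n \<noteq> 0" by auto
  then show ?thesis using c by simp
qed

lemma block_union:
  assumes "0 < (n::nat)" shows "(\<Union>j<t. {j*n..<j*n+n}) = {..<t*n}"
proof
  show "(\<Union>j<t. {j*n..<j*n+n}) \<subseteq> {..<t*n}"
  proof
    fix c assume "c \<in> (\<Union>j<t. {j*n..<j*n+n})"
    then obtain j where j: "j < t" "c < j*n+n" by auto
    have "j*n+n = Suc j * n" by simp
    also have "\<dots> \<le> t*n" using j(1) by (intro mult_le_mono1) simp
    finally show "c \<in> {..<t*n}" using j by simp
  qed
  show "{..<t*n} \<subseteq> (\<Union>j<t. {j*n..<j*n+n})"
  proof
    fix c assume "c \<in> {..<t*n}"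
    then have c: "c < t*n" by simp
    have "c div n < t" using c by (simp add: less_mult_imp_div_less)
    moreover have "(c div n)*n \<le> c" by (simp add: div_times_less_eq_dividend)
    moreover have "c < (c div n)*n + n"
      using assms mod_less_divisor[OF assms, of c] div_mult_mod_eq[of c n] by linarith
    ultimately show "c \<in> (\<Union>j<t. {j*n..<j*n+n})" by (intro UN_I[of "c div n"]) auto
  qed
qed

lemma block_disj:
  assumes "j \<noteq> j'" shows "{j*(n::nat)..<j*n+n} \<inter> {j'*n..<j'*n+n} = {}"
proof (rule equals0I)
  fix c assume "c \<in> {j*n..<j*n+n} \<inter> {j'*n..<j'*n+n}"
  then have "c div n = j" "c div n = j'" by (auto intro: block_div)
  with assms show False by simp
qed

lemma tCIS_from_blocks:
  assumes "0 < n" "\<forall>j<t. det (tomat n (\<lambda>r q. H r (j*n+q))) \<noteq> 0"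
  shows "tCIS_gen t n H"
  unfolding tCIS_gen_def
proof (intro exI[of _ "\<lambda>j. {j*n..<j*n+n}"] conjI allI impI)
  fix j assume "j < t"
  then show "info_set n H {j*n..<j*n+n}"
    using assms(2) info_from_det block_bij by blast
next
  fix j j' assume "j < t" "j' < t" "j \<noteq> j'"
  from \<open>j \<noteq> j'\<close> show "{j*n..<j*n+n} \<inter> {j'*n..<j'*n+n} = {}" by (rule block_disj)
next
  show "(\<Union>j<t. {j*n..<j*n+n}) = {..<t*n}" by (rule block_union[OF assms(1)])
qed



theorem proposition6:
  fixes t k :: nat and C :: "(nat \<Rightarrow> bit) set"
  assumes "t \<ge> 2" and "k \<ge> 2" and "tCIS_code t k C"
  shows "\<exists>\<sigma> A x y.
           \<sigma> permutes {..<t*k} \<and>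
           (\<forall>j<t. mat_invertible (k-1) (A j)) \<and>
           tCIS_gen t (k-1) (concat_blocks (k-1) A) \<and>
           tCIS_gen t k (build_up (k-1) A x y) \<and>
           perm_code (t*k) \<sigma> C = rowspace k (t*k) (build_up (k-1) A x y)"
proof -
  obtain G where GC: "C = rowspace k (t*k) G" and tg: "tCIS_gen t k G"
    using assms(3) unfolding tCIS_code_def by blast
  obtain P where Pinf: "\<forall>j<t. info_set k G (P j)"
    and Pdis: "\<forall>j<t. \<forall>j'<t. j \<noteq> j' \<longrightarrow> P j \<inter> P j' = {}"
    and Pun: "(\<Union>j<t. P j) = {..<t*k}"
    using tg unfolding tCIS_gen_def by blast
  define m where "m = k - 1"
  have km: "k = Suc m" using assms(2) by (simp add: m_def)
  have m0: "0 < m" using assms(2) m_def by simp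
  have k0: "0 < k" using km by simp
  have ex: "\<forall>j\<in>{..<t}. \<exists>e. bij_betw e {..<Suc m} (P j) \<and> det (tomat m (\<lambda>i q. G (Suc i) (e (Suc q)))) \<noteq> 0"
  proof
    fix j assume "j \<in> {..<t}"
    then have "info_set (Suc m) G (P j)" using Pinf km by simp
    then show "\<exists>e. bij_betw e {..<Suc m} (P j) \<and> det (tomat m (\<lambda>i q. G (Suc i) (e (Suc q)))) \<noteq> 0"
      by (rule choose_e)
  qed
  obtain E where E: "\<forall>j\<in>{..<t}. bij_betw (E j) {..<Suc m} (P j) \<and>
      det (tomat m (\<lambda>i q. G (Suc i) (E j (Suc q)))) \<noteq> 0"
    using bchoice[OF ex] by (elim exE)
  have Ebij: "bij_betw (E j) {..<k} (P j)" if "j < t" for j using E that km by auto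
  define \<sigma> where "\<sigma> c = (if c < t*k then E (c div k) (c mod k) else c)" for c
  define A where "A j i l = G (Suc i) (E j (Suc l))" for j i l
  define x where "x j l = G 0 (E j (Suc l))" for j l
  define y where "y i j = G (Suc i) (E j 0)" for i j
  have Aj: "A j = (\<lambda>i l. G (Suc i) (E j (Suc l)))" for j by (simp add: A_def fun_eq_iff)
  have xj: "x j = (\<lambda>l. G 0 (E j (Suc l)))" for j by (simp add: x_def fun_eq_iff)
  have dec: "c div k < t" "c mod k < k" if "c < t*k" for c
    using that k0 by (auto simp: less_mult_imp_div_less)
  have blk_lt: "j*k + q < t*k" if "j < t" "q < k" for j q
  proof -
    have "j*k + q < j*k + k" using that by simp
    also have "\<dots> = Suc j * k" by simp
    also have "\<dots> \<le> t*k" using that by (intro mult_le_mono1) simp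
    finally show ?thesis .
  qed
  have blk_div: "(j*k + q) div k = j" "(j*k+q) mod k = q" if "q < k" for j q
    using that block_div[of j k "j*k+q"] by auto
  have \<sigma>blk: "\<sigma> (j*k + q) = E j q" if "j<t" "q<k" for j q
    using that blk_lt blk_div by (simp add: \<sigma>_def)
  have Ein: "E j q \<in> P j" if "j<t" "q<k" for j q
    using Ebij[OF that(1)] that(2) unfolding bij_betw_def by auto
  have Elt: "E j q < t*k" if "j<t" "q<k" for j q
    using Ein[OF that] Pun that(1) by blast
  have \<sigma>lt: "\<sigma> c < t*k" if "c < t*k" for c
    using that dec Elt by (simp add: \<sigma>_def)
  have detM: "det (tomat (Suc m) (\<lambda>r q. G r (E j q))) \<noteq> 0" if "j < t" for j
    using det_from_info[OF _ Ebij[OF that]] Pinf that km by simp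
  have detA: "det (tomat m (A j)) \<noteq> 0" if "j < t" for j
    using E that by (simp add: Aj)
  have invA: "mat_invertible m (A j)" if "j < t" for j using L4[OF detA[OF that]] .
  have inj: "inj_on \<sigma> {..<t*k}"
  proof (rule inj_onI)
    fix c c' assume c: "c \<in> {..<t*k}" and c': "c' \<in> {..<t*k}" and eq: "\<sigma> c = \<sigma> c'"
    let ?j = "c div k" and ?q = "c mod k" and ?j' = "c' div k" and ?q' = "c' mod k"
    have d: "?j < t" "?q < k" "?j' < t" "?q' < k" using c c' dec by auto
    have eq2: "E ?j ?q = E ?j' ?q'" using eq c c' by (simp add: \<sigma>_def)
    have jj: "?j = ?j'"
    proof (rule ccontr)
      assume "?j \<noteq> ?j'"
      then have "P ?j \<inter> P ?j' = {}" using Pdis d by blast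
      moreover have "E ?j ?q \<in> P ?j" "E ?j' ?q' \<in> P ?j'" using Ein d by auto
      ultimately show False using eq2 by auto
    qed
    have "inj_on (E ?j) {..<k}" using Ebij[OF d(1)] bij_betw_def by blast
    then have qq: "?q = ?q'" using eq2 jj d unfolding inj_on_def by auto
    show "c = c'" using jj qq div_mult_mod_eq[of c k] div_mult_mod_eq[of c' k] by metis
  qed
  have sub: "\<sigma> ` {..<t*k} \<subseteq> {..<t*k}" using \<sigma>lt by auto
  have perm: "\<sigma> permutes {..<t*k}"
  proof (rule bij_imp_permutes)
    show "bij_betw \<sigma> {..<t*k} {..<t*k}"
      using endo_inj_surj[OF _ sub inj] inj by (simp add: bij_betw_def)
    show "\<And>c. c \<notin> {..<t*k} \<Longrightarrow> \<sigma> c = c" by (simp add: \<sigma>_def)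
  qed
  have mk: "m + 1 = k" using km by simp
  have key: "build_up m A x y r c = G r (\<sigma> c)" if r: "r < k" and c: "c < t*k" for r c
  proof -
    define j where "j = c div k"
    define p where "p = c mod k"
    have jp: "j < t" "p < k" using dec c by (auto simp: j_def p_def)
    have sc: "\<sigma> c = E j p" using c by (simp add: \<sigma>_def j_def p_def)
    have bu: "build_up m A x y r c =
      (if r = 0 then (if p = 0 then 1 + (\<Sum>i<m. Defs.coeffs m (A j) (x j) i * y i j) else x j (p - 1))
       else (if p = 0 then y (r - 1) j else A j (r - 1) (p - 1)))"
      unfolding build_up_def Let_def mk j_def[symmetric] p_def[symmetric] by (rule refl)
    show ?thesis
    proof (cases "r = 0")
      case True
      show ?thesis
      proof (cases "p = 0")
        case True
        have "G 0 (E j 0) = 1 + (\<Sum>i<m. Defs.coeffs m (\<lambda>i l. G (Suc i) (E j (Suc l)))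
                (\<lambda>l. G 0 (E j (Suc l))) i * G (Suc i) (E j 0))"
          by (rule z_ident[of m G "E j", OF detM[OF jp(1)]]) (use invA[OF jp(1)] in \<open>simp add: Aj\<close>)
        then show ?thesis using bu \<open>r = 0\<close> True sc by (simp add: Aj xj y_def)
      next
        case False
        then have "Suc (p - 1) = p" by simp
        then show ?thesis using bu \<open>r = 0\<close> False sc by (simp add: x_def)
      qed
    next
      case False
      then have r1: "Suc (r - 1) = r" by simp
      show ?thesis
      proof (cases "p = 0")
        case True
        then show ?thesis using bu False r1 sc by (simp add: y_def)
      next
        case pF: False
        then have "Suc (p - 1) = p" by simp
        then show ?thesis using bu False pF r1 sc by (simp add: A_def)
      qed
    qed
  qed
  have bu_cis: "tCIS_gen t k (build_up m A x y)"
  proof (rule tCIS_from_blocks[OF k0], intro allI impI)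
    fix j assume j: "j < t"
    have "tomat k (\<lambda>r q. build_up m A x y r (j*k+q)) = tomat k (\<lambda>r q. G r (E j q))"
      by (rule tomat_cong) (simp add: key blk_lt j \<sigma>blk)
    then show "det (tomat k (\<lambda>r q. build_up m A x y r (j*k+q))) \<noteq> 0" using detM[OF j] km by simp
  qed
  have cc_cis: "tCIS_gen t m (concat_blocks m A)"
  proof (rule tCIS_from_blocks[OF m0], intro allI impI)
    fix j assume j: "j < t"
    have "(j*m + q) div m = j" "(j*m+q) mod m = q" if "q < m" for q
      using that block_div[of j m "j*m+q"] by auto
    then have "tomat m (\<lambda>r q. concat_blocks m A r (j*m+q)) = tomat m (A j)"
      by (intro tomat_cong) (simp add: concat_blocks_def)
    then show "det (tomat m (\<lambda>r q. concat_blocks m A r (j*m+q))) \<noteq> 0" using detA[OF j] by simp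
  qed
  have rs: "perm_code (t*k) \<sigma> C = rowspace k (t*k) (build_up m A x y)"
  proof -
    let ?F = "\<lambda>v c. if c < t*k then v (\<sigma> c) else (0::bit)"
    have "?F ` rowspace k (t*k) G = rowspace k (t*k) (build_up m A x y)"
    proof
      show "?F ` rowspace k (t*k) G \<subseteq> rowspace k (t*k) (build_up m A x y)"
      proof
        fix v assume "v \<in> ?F ` rowspace k (t*k) G"
        then obtain w a where v: "v = ?F w" and w: "\<forall>c. w c = (if c < t*k then (\<Sum>i<k. a i * G i c) else 0)"
          unfolding rowspace_def by blast
        have "\<forall>c. v c = (if c < t*k then (\<Sum>i<k. a i * build_up m A x y i c) else 0)"
        proof
          fix c show "v c = (if c < t*k then (\<Sum>i<k. a i * build_up m A x y i c) else 0)"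
          proof (cases "c < t*k")
            case True
            have "v c = (\<Sum>i<k. a i * G i (\<sigma> c))" using v w True \<sigma>lt[OF True] by simp
            also have "\<dots> = (\<Sum>i<k. a i * build_up m A x y i c)"
              by (rule sum.cong) (simp_all add: key True)
            finally show ?thesis using True by simp
          qed (simp add: v)
        qed
        then show "v \<in> rowspace k (t*k) (build_up m A x y)" unfolding rowspace_def by blast
      qed
      show "rowspace k (t*k) (build_up m A x y) \<subseteq> ?F ` rowspace k (t*k) G"
      proof
        fix v assume "v \<in> rowspace k (t*k) (build_up m A x y)"
        then obtain a where a: "\<forall>c. v c = (if c < t*k then (\<Sum>i<k. a i * build_up m A x y i c) else 0)"
          unfolding rowspace_def by blast
        define w where "w c = (if c < t*k then (\<Sum>i<k. a i * G i c) else 0)" for c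
        have wr: "w \<in> rowspace k (t*k) G" unfolding rowspace_def w_def by blast
        have "v = ?F w"
        proof
          fix c show "v c = ?F w c"
          proof (cases "c < t*k")
            case True
            have "v c = (\<Sum>i<k. a i * build_up m A x y i c)" using a True by simp
            also have "\<dots> = (\<Sum>i<k. a i * G i (\<sigma> c))"
              by (rule sum.cong) (simp_all add: key True)
            finally show ?thesis using True \<sigma>lt[OF True] by (simp add: w_def)
          qed (simp add: a)
        qed
        then show "v \<in> ?F ` rowspace k (t*k) G" using wr by blast
      qed
    qed
    then show ?thesis unfolding perm_code_def GC .
  qed
  show ?thesis
    unfolding m_def[symmetric] by (intro exI[of _ \<sigma>] exI[of _ A] exI[of _ x] exI[of _ y] conjI perm allI impI invA cc_cis bu_cis rs)
qed

end
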